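(* Assume $q\equiv1\pmod 4$. Then $S^{(3)}(\beta)=0$ if and only if \[ \begin{cases} K(\chi)+\zeta_4K(\eta_{1/4}\chi)-K(\eta_{1/2}\chi)-\zeta_4K(\eta_{3/4}\chi)\equiv0 \pmod{8\mathcal{P}\,\mathbb{Z}[\zeta_{4k}]} & \text{if } q\equiv1\pmod 8,\\ K(\chi)-\zeta_4K(\eta_{1/4}\chi)-K(\eta_{1/2}\chi)+\zeta_4K(\eta_{3/4}\chi)\equiv0 \pmod{8\mathcal{P}\,\mathbb{Z}[\zeta_{4k}]} & \text{if } q\equiv5\pmod 8. \end{cases} \]
   Context: Let $p$ be an odd prime, $m\ge1$, $q=p^m$, $\alpha$ a primitive element of $\mathbb{F}_q$, and $T=q-1$. The binary SLCE sequence $(s_n)_{n\ge0}$ is defined as follows: $s_n=1$ if $\alpha^n+1$ is a nonzero non-square of $\mathbb{F}_q$, and $s_n=0$ otherwise. Put $S(X)=\sum_{n=0}^{T-1}s_nX^n\in\mathbb{F}_2[X]$. For an integer $t\ge0$, the $t$-th Hasse derivative is $S^{(t)}(X)=\sum_{n=t}^{T-1}\binom{n}{t}s_nX^{n-t}$, with coefficients reduced mod $2$. Let $\beta$ be an element of an algebraic closure of $\mathbb{F}_2$ with $\beta^T=1$ and multiplicative order $k>1$ (so $k$ is odd). Let $f$ be the order of $2$ modulo $k$, and write $\zeta_N=e^{2\pi i/N}$. Let $\mathcal{P}$ be a prime ideal of $\mathbb{Z}[\zeta_k]$ containing $2$. Fix a field isomorphism $\phi:\mathbb{F}_2(\beta)=\mathbb{F}_{2^f}\to\mathbb{Z}[\zeta_k]/\mathcal{P}$,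 and let $\zeta$ be the unique complex $k$-th root of unity with $\phi(\beta)=\zeta+\mathcal{P}$. Multiplicative characters of $\mathbb{F}_q$ are homomorphisms $\mathbb{F}_q^*\to\mathbb{C}^*$, extended by value $0$ at $0$. For a rational $j$ with $(q-1)j\in\mathbb{Z}$, $\eta_j$ is the character with $\eta_j(\alpha)=e^{2\pi ij}$. Let $\rho=\eta_{1/2}$ be the quadratic character. Let $\chi$ be the character with $\chi(\alpha^n)=\zeta^n$. For a character $\psi$, set $K(\psi)=\sum_{x\in\mathbb{F}_q}\rho(x)\psi(1-x)$. For an ideal $I$ of $\mathbb{Z}[\zeta_k]$, $I\,\mathbb{Z}[\zeta_{4k}]$ is the ideal it generates in $\mathbb{Z}[\zeta_{4k}]$. *)

theory Defs
  imports Complex_Main "HOL-Computational_Algebra.Polynomial"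
begin

definition primitive_elem :: "'a::{field,finite} \<Rightarrow> bool" where
  "primitive_elem \<alpha> \<longleftrightarrow> \<alpha> \<noteq> 0 \<and> (\<forall>x. x \<noteq> 0 \<longrightarrow> (\<exists>n::nat. \<alpha> ^ n = x))"

definition slce :: "'a::{field,finite} \<Rightarrow> nat \<Rightarrow> nat" where
  "slce \<alpha> n = (if \<alpha> ^ n + 1 \<noteq> 0 \<and> \<not> (\<exists>y. y ^ 2 = \<alpha> ^ n + 1) then 1 else 0)"

text \<open>t-th Hasse derivative of S(X) = sum_{n<T} s_n X^n, evaluated at beta in a field of
  characteristic 2; coefficients reduced mod 2.\<close>
definition hasse_eval :: "(nat \<Rightarrow> nat) \<Rightarrow> nat \<Rightarrow> nat \<Rightarrow> 'b::field \<Rightarrow> 'b" where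
  "hasse_eval s T t \<beta> = (\<Sum>n\<in>{t..<T}. of_nat (((n choose t) * s n) mod 2) * \<beta> ^ (n - t))"

definition dlog :: "'a::{field,finite} \<Rightarrow> 'a \<Rightarrow> nat" where
  "dlog \<alpha> x = (LEAST n. \<alpha> ^ n = x)"

definition eta :: "'a::{field,finite} \<Rightarrow> real \<Rightarrow> 'a \<Rightarrow> complex" where
  "eta \<alpha> j x = (if x = 0 then 0 else exp (2 * of_real pi * \<i> * of_real j * of_nat (dlog \<alpha> x)))"

definition chi :: "'a::{field,finite} \<Rightarrow> complex \<Rightarrow> 'a \<Rightarrow> complex" where
  "chi \<alpha> z x = (if x = 0 then 0 else z ^ dlog \<alpha> x)"

definition Ksum :: "'a::{field,finite} \<Rightarrow> ('a \<Rightarrow> complex) \<Rightarrow> complex" where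
  "Ksum \<alpha> \<psi> = (\<Sum>x\<in>(UNIV::'a set). eta \<alpha> (1/2) x * \<psi> (1 - x))"

definition zetaN :: "nat \<Rightarrow> complex" where
  "zetaN N = exp (2 * of_real pi * \<i> / of_nat N)"

definition cyc_int :: "nat \<Rightarrow> complex set" where
  "cyc_int N = {poly (map_poly of_int g) (zetaN N) | g :: int poly. True}"

definition is_ideal :: "complex set \<Rightarrow> complex set \<Rightarrow> bool" where
  "is_ideal R I \<longleftrightarrow> I \<subseteq> R \<and> 0 \<in> I \<and> (\<forall>x\<in>I. \<forall>y\<in>I. x + y \<in> I) \<and> (\<forall>x\<in>I. - x \<in> I)
     \<and> (\<forall>r\<in>R. \<forall>x\<in>I. r * x \<in> I)"

definition is_prime_ideal :: "complex set \<Rightarrow> complex set \<Rightarrow> bool" where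
  "is_prime_ideal R I \<longleftrightarrow> is_ideal R I \<and> I \<noteq> R \<and> (\<forall>a\<in>R. \<forall>b\<in>R. a * b \<in> I \<longrightarrow> a \<in> I \<or> b \<in> I)"

definition ideal_span :: "complex set \<Rightarrow> complex set \<Rightarrow> complex set" where
  "ideal_span R A = \<Inter> {J. is_ideal R J \<and> A \<subseteq> J}"

definition coset :: "complex set \<Rightarrow> complex \<Rightarrow> complex set" where
  "coset P x = (\<lambda>p. x + p) ` P"

definition quot_set :: "complex set \<Rightarrow> complex set \<Rightarrow> complex set set" where
  "quot_set R P = coset P ` R"

text \<open>F_2(beta) inside a field of characteristic 2: since beta is algebraic (beta^T = 1),
  F_2(beta) = F_2[beta], the set of integer polynomials evaluated at beta.\<close>
definition F2_adj :: "'b::field \<Rightarrow> 'b set" where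
  "F2_adj \<beta> = {poly (map_poly of_int g) \<beta> | g :: int poly. True}"

definition quot_iso :: "('b::field \<Rightarrow> complex set) \<Rightarrow> 'b set \<Rightarrow> complex set \<Rightarrow> complex set \<Rightarrow> bool" where
  "quot_iso \<phi> F R P \<longleftrightarrow> bij_betw \<phi> F (quot_set R P) \<and>
     (\<forall>a\<in>F. \<forall>b\<in>F. \<forall>x\<in>\<phi> a. \<forall>y\<in>\<phi> b.
        \<phi> (a + b) = coset P (x + y) \<and> \<phi> (a * b) = coset P (x * y))"

definition mult_order :: "'b::field \<Rightarrow> nat \<Rightarrow> bool" where
  "mult_order \<beta> k \<longleftrightarrow> 0 < k \<and> \<beta> ^ k = 1 \<and> (\<forall>d. 0 < d \<and> d < k \<longrightarrow> \<beta> ^ d \<noteq> 1)"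

end

theory Submission
  imports Defs
begin

definition ip :: "'a::comm_ring_1 \<Rightarrow> 'a set" where
  "ip z = {poly (map_poly of_int g) z | g :: int poly. True}"

lemma cyc_ip: "cyc_int N = ip (zetaN N)" by (simp add: cyc_int_def ip_def)
lemma F2_ip: "F2_adj b = ip b" by (simp add: F2_adj_def ip_def)

lemma mp_add: "map_poly (of_int :: int \<Rightarrow> 'a::comm_ring_1) (g + h) = map_poly of_int g + map_poly of_int h"
  by (rule poly_eqI) (simp add: coeff_map_poly)
lemma mp_uminus: "map_poly (of_int :: int \<Rightarrow> 'a::comm_ring_1) (- g) = - map_poly of_int g"
  by (rule poly_eqI) (simp add: coeff_map_poly)

lemma ip_add: "x \<in> ip z \<Longrightarrow> y \<in> ip z \<Longrightarrow> x + y \<in> ip z"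
  unfolding ip_def by clarsimp (metis mp_add poly_add)
lemma ip_uminus: "x \<in> ip z \<Longrightarrow> - x \<in> ip z"
  unfolding ip_def by clarsimp (metis mp_uminus poly_minus)
lemma ip_diff: "x \<in> ip z \<Longrightarrow> y \<in> ip z \<Longrightarrow> x - y \<in> ip z"
  using ip_add[of x z "-y"] ip_uminus[of y z] by simp
lemma ip_of_int: "of_int a \<in> ip z"
  unfolding ip_def by (intro CollectI exI[of _ "[:a:]"]) (simp add: map_poly_pCons)
lemma ip_0: "0 \<in> ip z" using ip_of_int[of 0 z] by simp
lemma ip_1: "1 \<in> ip z" using ip_of_int[of 1 z] by simp
lemma ip_z: "z \<in> ip z"
  unfolding ip_def by (intro CollectI exI[of _ "[:0,1:]"]) (simp add: map_poly_pCons)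
lemma ip_zmult: "x \<in> ip z \<Longrightarrow> z * x \<in> ip z"
  unfolding ip_def by clarsimp (rule exI[of _ "pCons 0 _"], simp add: map_poly_pCons)
lemma ip_intmult: "x \<in> ip z \<Longrightarrow> of_int a * x \<in> ip z"
  unfolding ip_def by clarsimp (rule exI[of _ "smult a _"], simp add: map_poly_smult)

lemma ip_mult: assumes "x \<in> ip z" "y \<in> ip z" shows "x * y \<in> ip z"
proof -
  obtain g where x: "x = poly (map_poly of_int g) z" using assms(1) unfolding ip_def by auto
  have "poly (map_poly of_int g) z * y \<in> ip z" for g
  proof (induction g)
    case 0 then show ?case by (simp add: ip_0)
  next
    case (pCons a g)
    have "poly (map_poly of_int (pCons a g)) z * y = of_int a * y + z * (poly (map_poly of_int g) z * y)"
      by (simp add: map_poly_pCons algebra_simps)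
    then show ?case using pCons ip_add ip_zmult ip_intmult assms(2) by metis
  qed
  then show ?thesis using x by simp
qed

lemma ip_pow: "x \<in> ip z \<Longrightarrow> x ^ n \<in> ip z"
  by (induction n) (simp_all add: ip_1 ip_mult)

lemma ip_sum: "(\<And>i. i \<in> A \<Longrightarrow> f i \<in> ip z) \<Longrightarrow> sum f A \<in> ip z"
  by (induction A rule: infinite_finite_induct) (simp_all add: ip_0 ip_add)

lemma ip_sub: assumes "w \<in> ip z" shows "ip w \<subseteq> ip z"
proof
  fix x assume "x \<in> ip w"
  then obtain g where x: "x = poly (map_poly of_int g) w" unfolding ip_def by auto
  have "poly (map_poly of_int g) w \<in> ip z" for g
    by (induction g) (simp_all add: map_poly_pCons ip_0 ip_add ip_of_int ip_mult assms)
  then show "x \<in> ip z" using x by simp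
qed

lemma fermat_ff: fixes x :: "'a::{field,finite}" assumes "x \<noteq> 0"
  shows "x ^ (card (UNIV::'a set) - 1) = 1"
proof -
  let ?U = "UNIV - {0::'a}"
  have inj: "inj_on (\<lambda>y. x * y) ?U" using assms by (auto simp: inj_on_def)
  have img: "(\<lambda>y. x * y) ` ?U = ?U"
  proof
    show "(\<lambda>y. x * y) ` ?U \<subseteq> ?U" using assms by auto
    show "?U \<subseteq> (\<lambda>y. x * y) ` ?U"
    proof
      fix u assume u: "u \<in> ?U"
      then have "u = x * (u / x)" "u / x \<in> ?U" using assms by auto
      then show "u \<in> (\<lambda>y. x * y) ` ?U" by blast
    qed
  qed
  have "prod (\<lambda>y. y) ?U = prod (\<lambda>y. y) ((\<lambda>y. x * y) ` ?U)" using img by simp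
  also have "\<dots> = prod (\<lambda>y. x * y) ?U" using prod.reindex[OF inj, of "\<lambda>y. y"] by simp
  also have "\<dots> = x ^ card ?U * prod (\<lambda>y. y) ?U" by (simp add: prod.distrib)
  finally have "x ^ card ?U * prod (\<lambda>y. y) ?U = 1 * prod (\<lambda>y. y) ?U" by simp
  moreover have "prod (\<lambda>y. y) ?U \<noteq> 0" by simp
  ultimately have "x ^ card ?U = 1" by (metis mult_cancel_right)
  moreover have "card ?U = card (UNIV::'a set) - 1" by (simp add: card_Diff_singleton)
  ultimately show ?thesis by simp
qed

lemma card_ge2: "card (UNIV::'a::{field,finite} set) \<ge> 2"
proof -
  have "{0::'a, 1} \<subseteq> UNIV" by simp
  then have "card {0::'a,1} \<le> card (UNIV::'a set)" by (rule card_mono[OF finite_UNIV])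
  then show ?thesis by simp
qed

locale ff =
  fixes \<alpha> :: "'a::{field,finite}" and T :: nat
  assumes prim: "primitive_elem \<alpha>" and T_def: "T = card (UNIV::'a set) - 1"
begin

lemma T_pos: "T > 0" using card_ge2[where 'a='a] T_def by linarith

lemma a_nz: "\<alpha> \<noteq> 0" using prim by (simp add: primitive_elem_def)

lemma aT: "\<alpha> ^ T = 1" using fermat_ff[OF a_nz] T_def by simp

lemma pow_mod_gen: "(w::'b::monoid_mult) ^ T = 1 \<Longrightarrow> w ^ n = w ^ (n mod T)"
proof -
  assume w: "w ^ T = 1"
  have "w ^ n = w ^ (T * (n div T) + n mod T)" by simp
  also have "\<dots> = w ^ (n mod T)" by (simp only: power_add power_mult w power_one mult_1)
  finally show ?thesis .
qed

lemma a_mod: "\<alpha> ^ n = \<alpha> ^ (n mod T)" using pow_mod_gen[OF aT] .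

lemma img: "(\<lambda>n. \<alpha> ^ n) ` {..<T} = UNIV - {0}"
proof
  show "(\<lambda>n. \<alpha> ^ n) ` {..<T} \<subseteq> UNIV - {0}" using a_nz by auto
  show "UNIV - {0} \<subseteq> (\<lambda>n. \<alpha> ^ n) ` {..<T}"
  proof
    fix x assume "x \<in> UNIV - {0::'a}"
    then obtain n where "\<alpha> ^ n = x" using prim by (auto simp: primitive_elem_def)
    then have "x = \<alpha> ^ (n mod T)" "n mod T < T" using a_mod T_pos by auto
    then show "x \<in> (\<lambda>n. \<alpha> ^ n) ` {..<T}" by blast
  qed
qed

lemma inj: "inj_on (\<lambda>n. \<alpha> ^ n) {..<T}"
proof (rule eq_card_imp_inj_on)
  show "card ((\<lambda>n. \<alpha> ^ n) ` {..<T}) = card {..<T}"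
    unfolding img by (simp add: card_Diff_singleton T_def)
qed simp

lemma pow_eq: "m < T \<Longrightarrow> n < T \<Longrightarrow> \<alpha> ^ m = \<alpha> ^ n \<Longrightarrow> m = n"
  using inj by (auto simp: inj_on_def)

lemma dlog: assumes "x \<noteq> 0" shows "\<alpha> ^ dlog \<alpha> x = x" "dlog \<alpha> x < T"
proof -
  obtain n where n: "\<alpha> ^ n = x" using prim assms by (auto simp: primitive_elem_def)
  show "\<alpha> ^ dlog \<alpha> x = x" unfolding dlog_def by (rule LeastI[of _ n]) (rule n)
  have "\<alpha> ^ (n mod T) = x" using n a_mod by simp
  then have "dlog \<alpha> x \<le> n mod T" unfolding dlog_def by (rule Least_le)
  then show "dlog \<alpha> x < T" using T_pos by (meson le_less_trans mod_less_divisor)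
qed

lemma dlog_pow: "dlog \<alpha> (\<alpha> ^ n) = n mod T"
proof -
  have nz: "\<alpha> ^ n \<noteq> 0" using a_nz by simp
  show ?thesis
    by (rule pow_eq) (use dlog[OF nz] a_mod T_pos in auto)
qed

definition psi :: "complex \<Rightarrow> 'a \<Rightarrow> complex" where
  "psi w x = (if x = 0 then 0 else w ^ dlog \<alpha> x)"

lemma psi_0[simp]: "psi w 0 = 0" by (simp add: psi_def)

lemma psi_pow: "w ^ T = 1 \<Longrightarrow> psi w (\<alpha> ^ n) = w ^ n"
  using a_nz by (simp add: psi_def dlog_pow pow_mod_gen[of w n])

lemma psi_mult: assumes w: "w ^ T = 1" shows "psi w (x * y) = psi w x * psi w y"
proof (cases "x = 0 \<or> y = 0")
  case True then show ?thesis by auto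
next
  case False
  then have xy: "x * y = \<alpha> ^ (dlog \<alpha> x + dlog \<alpha> y)" using dlog by (simp add: power_add)
  have "psi w (x * y) = w ^ (dlog \<alpha> x + dlog \<alpha> y)" unfolding xy by (rule psi_pow[OF w])
  then show ?thesis using False by (simp add: psi_def power_add)
qed

lemma sum_univ: "(\<Sum>x\<in>UNIV. f x) = f 0 + (\<Sum>n<T. f (\<alpha> ^ n))"
proof -
  have "(\<Sum>x\<in>UNIV. f x) = f 0 + (\<Sum>x\<in>UNIV - {0}. f x)"
    by (metis finite_UNIV sum.remove UNIV_I)
  also have "(\<Sum>x\<in>UNIV - {0}. f x) = (\<Sum>n<T. f (\<alpha> ^ n))"
    unfolding img[symmetric] by (subst sum.reindex[OF inj]) simp
  finally show ?thesis .
qed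

lemma sum_shift: "(\<Sum>x\<in>UNIV. g (x + 1)) = (\<Sum>x\<in>(UNIV::'a set). g x)"
proof -
  have "inj (\<lambda>x::'a. x + 1)" by (auto simp: inj_on_def)
  moreover have "range (\<lambda>x::'a. x + 1) = UNIV"
    by (metis UNIV_eq_I diff_add_cancel rangeI)
  ultimately show ?thesis using sum.reindex[of "\<lambda>x::'a. x + 1" UNIV g] by simp
qed


lemma eta_psi: "eta \<alpha> j = psi (exp (2 * of_real pi * \<i> * of_real j))"
proof
  fix x
  have "exp (2 * of_real pi * \<i> * of_real j * of_nat (dlog \<alpha> x)) =
        exp (of_nat (dlog \<alpha> x) * (2 * of_real pi * \<i> * of_real j))" by (simp add: mult_ac)
  then show "eta \<alpha> j x = psi (exp (2 * of_real pi * \<i> * of_real j)) x"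
    by (simp add: eta_def psi_def exp_of_nat_mult)
qed

lemma chi_psi: "chi \<alpha> z = psi z" by (auto simp: chi_def psi_def)

lemma a_half: assumes "even T" shows "\<alpha> ^ (T div 2) = -1"
proof -
  have "(\<alpha> ^ (T div 2)) ^ 2 = 1" using aT assms by (simp add: power_mult[symmetric])
  then have "\<alpha> ^ (T div 2) = 1 \<or> \<alpha> ^ (T div 2) = -1" by (simp add: power2_eq_1_iff)
  moreover have "\<alpha> ^ (T div 2) \<noteq> \<alpha> ^ 0"
  proof
    assume "\<alpha> ^ (T div 2) = \<alpha> ^ 0"
    then have "T div 2 = 0" using pow_eq[of "T div 2" 0] T_pos by simp
    then show False using T_pos assms by auto
  qed
  ultimately show ?thesis by simp
qed

lemma neg1_iff: assumes "even T" "n < T" shows "\<alpha> ^ n + 1 = 0 \<longleftrightarrow> n = T div 2"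
proof -
  have "\<alpha> ^ n + 1 = 0 \<longleftrightarrow> \<alpha> ^ n = \<alpha> ^ (T div 2)"
    using a_half[OF assms(1)] by (simp add: eq_neg_iff_add_eq_0[symmetric])
  also have "\<dots> \<longleftrightarrow> n = T div 2" using pow_eq[of n "T div 2"] assms T_pos by auto
  finally show ?thesis .
qed

lemma sq_iff: assumes "even T" "x \<noteq> 0" shows "(\<exists>y. y ^ 2 = x) \<longleftrightarrow> even (dlog \<alpha> x)"
proof
  assume "\<exists>y. y ^ 2 = x"
  then obtain y where y: "y ^ 2 = x" by blast
  then have "y \<noteq> 0" using assms by auto
  then have "x = \<alpha> ^ (2 * dlog \<alpha> y)" using y dlog by (simp add: power_mult mult.commute[of 2] )
  then have "dlog \<alpha> x = (2 * dlog \<alpha> y) mod T" using dlog_pow by simp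
  moreover have "(2 * dlog \<alpha> y) mod T mod 2 = 0" using mod_mod_cancel[OF assms(1)] by simp
  ultimately show "even (dlog \<alpha> x)" by (simp add: even_iff_mod_2_eq_zero)
next
  assume "even (dlog \<alpha> x)"
  then obtain m where "dlog \<alpha> x = 2 * m" by blast
  then have "(\<alpha> ^ m) ^ 2 = x" using dlog[OF assms(2)] by (simp add: power_mult[symmetric] mult.commute)
  then show "\<exists>y. y ^ 2 = x" by blast
qed

lemma rho_val: assumes "even T" "x \<noteq> 0"
  shows "psi (-1) x = (if (\<exists>y. y ^ 2 = x) then 1 else -1)"
  using sq_iff[OF assms] assms(2) by (simp add: psi_def)

lemma slce_c: assumes "even T"
  shows "2 * of_nat (slce \<alpha> n) = 1 - psi (-1) (\<alpha> ^ n + 1) - (if \<alpha> ^ n + 1 = 0 then 1 else (0::complex))"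
  using rho_val[OF assms, of "\<alpha> ^ n + 1"] by (auto simp: slce_def)

lemma key_sum: assumes "even T" "w ^ T = 1"
  shows "(\<Sum>n<T. psi (-1) (\<alpha> ^ n + 1) * w ^ n) = w ^ (T div 2) * Ksum \<alpha> (psi w)"
proof -
  have m1: "(-1::complex) ^ T = 1" using assms(1) by simp
  have "(\<Sum>n<T. psi (-1) (\<alpha> ^ n + 1) * w ^ n) = (\<Sum>n<T. psi (-1) (\<alpha> ^ n + 1) * psi w (\<alpha> ^ n))"
    using psi_pow[OF assms(2)] by simp
  also have "\<dots> = (\<Sum>x\<in>UNIV. psi (-1) (x + 1) * psi w x)"
    using sum_univ[of "\<lambda>x. psi (-1) (x + 1) * psi w x"] by simp
  also have "\<dots> = (\<Sum>x\<in>UNIV. psi (-1) x * psi w (x - 1))"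
    using sum_shift[of "\<lambda>x. psi (-1) x * psi w (x - 1)"] by simp
  also have "\<dots> = (\<Sum>x\<in>UNIV. psi w (-1) * (psi (-1) x * psi w (1 - x)))"
  proof (rule sum.cong[OF refl])
    fix x :: 'a
    have "x - 1 = (-1) * (1 - x)" by simp
    then have "psi w (x - 1) = psi w (-1) * psi w (1 - x)" using psi_mult[OF assms(2)] by metis
    then show "psi (-1) x * psi w (x - 1) = psi w (-1) * (psi (-1) x * psi w (1 - x))" by simp
  qed
  also have "\<dots> = psi w (-1) * Ksum \<alpha> (psi w)"
    by (simp add: Ksum_def sum_distrib_left eta_psi)
  also have "psi w (-1) = w ^ (T div 2)" using a_half[OF assms(1)] psi_pow[OF assms(2)] by metis
  finally show ?thesis .
qed

end

lemma i_pow_mod: "\<i> ^ n = \<i> ^ (n mod 4)"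
proof -
  have "\<i> ^ n = \<i> ^ (4 * (n div 4) + n mod 4)" by simp
  also have "\<dots> = \<i> ^ (n mod 4)" by (simp only: power_add power_mult) simp
  finally show ?thesis .
qed

lemma exp_ihalf: "exp (\<i> * complex_of_real (pi/2)) = \<i>"
  using cis_pi_half cis_conv_exp by metis

lemma exp_quarter: "exp (2 * of_real pi * \<i> * of_real (1/4)) = \<i>"
proof -
  have a: "2 * of_real pi * \<i> * of_real (1/4) = \<i> * complex_of_real (pi / 2)" by simp
  show ?thesis unfolding a by (rule exp_ihalf)
qed

lemma exp_half: "exp (2 * of_real pi * \<i> * of_real (1/2)) = -1"
proof -
  have "2 * of_real pi * \<i> * of_real (1/2) = \<i> * complex_of_real pi" by simp
  then show ?thesis using exp_pi_i' by simp
qed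

lemma exp_3quarter: "exp (2 * of_real pi * \<i> * of_real (3/4)) = - \<i>"
proof -
  have "2 * of_real pi * \<i> * of_real (3/4) = of_nat 3 * (\<i> * complex_of_real (pi / 2))" by simp
  then have "exp (2 * of_real pi * \<i> * of_real (3/4)) = (cis (pi/2)) ^ 3"
    by (simp only: exp_of_nat_mult cis_conv_exp)
  then show ?thesis by (simp add: eval_nat_numeral)
qed

lemma zetaN4: "zetaN 4 = \<i>"
proof -
  have a: "2 * of_real pi * \<i> / of_nat 4 = \<i> * complex_of_real (pi / 2)" by simp
  show ?thesis unfolding zetaN_def a by (rule exp_ihalf)
qed

lemma indic: "(1::complex) + \<i> * \<i> ^ n - (-1) ^ n - \<i> * (- \<i>) ^ n = (if n mod 4 = 3 then 4 else 0)"
proof -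
  have m: "(-1::complex) ^ n = \<i> ^ (2 * n)" by (simp add: power_mult)
  have "- \<i> = \<i> ^ 3" by (simp add: eval_nat_numeral)
  then have m2: "(- \<i>) ^ n = \<i> ^ (3 * n)" by (simp add: power_mult)
  have "n mod 4 = 0 \<or> n mod 4 = 1 \<or> n mod 4 = 2 \<or> n mod 4 = 3" by arith
  moreover have "\<i> ^ (2*n) = \<i> ^ ((2 * n) mod 4)" "\<i> ^ (3*n) = \<i> ^ ((3 * n) mod 4)" "\<i> ^ n = \<i> ^ (n mod 4)"
    using i_pow_mod by blast+
  moreover have "(2 * n) mod 4 = (2 * (n mod 4)) mod 4" "(3 * n) mod 4 = (3 * (n mod 4)) mod 4"
    by (simp_all add: mod_mult_right_eq)
  moreover have "\<i> * \<i> ^ 3 = 1" by (simp add: eval_nat_numeral)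
  ultimately show ?thesis unfolding m m2 by (elim disjE) simp_all
qed

context ff begin

lemma geo0: assumes "w ^ T = 1" "w \<noteq> 1" shows "(\<Sum>n<T. w ^ n) = (0::complex)"
  using assms by (simp add: geometric_sum)

lemma G_eq: assumes ev: "even T" and w: "w ^ T = 1" "w \<noteq> 1"
  shows "(\<Sum>n<T. 2 * of_nat (slce \<alpha> n) * w ^ n) = - (w ^ (T div 2)) * (Ksum \<alpha> (psi w) + 1)"
proof -
  have d: "(\<Sum>n<T. (if \<alpha> ^ n + 1 = 0 then 1 else 0) * w ^ n) = w ^ (T div 2)"
  proof -
    have "(\<Sum>n<T. (if \<alpha> ^ n + 1 = 0 then 1 else 0) * w ^ n) = (\<Sum>n<T. if n = T div 2 then w ^ n else 0)"
      by (rule sum.cong[OF refl]) (simp add: neg1_iff[OF ev])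
    also have "\<dots> = w ^ (T div 2)" using T_pos by simp
    finally show ?thesis .
  qed
  have "(\<Sum>n<T. 2 * of_nat (slce \<alpha> n) * w ^ n) =
     (\<Sum>n<T. w ^ n - psi (-1) (\<alpha> ^ n + 1) * w ^ n - (if \<alpha> ^ n + 1 = 0 then 1 else 0) * w ^ n)"
    by (rule sum.cong[OF refl]) (simp add: slce_c[OF ev] algebra_simps)
  also have "\<dots> = (\<Sum>n<T. w ^ n) - (\<Sum>n<T. psi (-1) (\<alpha> ^ n + 1) * w ^ n)
       - (\<Sum>n<T. (if \<alpha> ^ n + 1 = 0 then 1 else 0) * w ^ n)"
    by (simp add: sum_subtractf)
  also have "\<dots> = - (w ^ (T div 2)) * (Ksum \<alpha> (psi w) + 1)"
    unfolding d geo0[OF w] key_sum[OF ev w(1)] by (simp add: algebra_simps)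
  finally show ?thesis .
qed

definition Aset :: "nat set" where "Aset = {n. n < T \<and> n mod 4 = 3 \<and> slce \<alpha> n = 1}"

lemma slce01: "slce \<alpha> n = 0 \<or> slce \<alpha> n = 1" by (simp add: slce_def)

lemma A_eq: "(\<Sum>n\<in>Aset. (z::complex) ^ n) = (\<Sum>n<T. (if n mod 4 = 3 then of_nat (slce \<alpha> n) * z ^ n else 0))"
proof -
  have e: "Aset = {n \<in> {..<T}. n mod 4 = 3 \<and> slce \<alpha> n = 1}" by (auto simp: Aset_def)
  have "(\<Sum>n\<in>Aset. z ^ n) = (\<Sum>n<T. if n mod 4 = 3 \<and> slce \<alpha> n = 1 then z ^ n else 0)"
    by (simp only: e sum.inter_filter[OF finite_lessThan])
  also have "\<dots> = (\<Sum>n<T. (if n mod 4 = 3 then of_nat (slce \<alpha> n) * z ^ n else 0))"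
  proof (rule sum.cong[OF refl])
    fix n show "(if n mod 4 = 3 \<and> slce \<alpha> n = 1 then z ^ n else 0) = (if n mod 4 = 3 then of_nat (slce \<alpha> n) * z ^ n else 0)"
      using slce01[of n] by auto
  qed
  finally show ?thesis .
qed

lemma main_id: assumes ev: "even T" and z: "\<zeta> ^ T = 1" "\<zeta> ^ (T div 2) = 1"
  and i4: "\<i> ^ T = 1"
  and ne: "\<zeta> \<noteq> 1" "\<i> * \<zeta> \<noteq> 1" "- \<zeta> \<noteq> 1" "- \<i> * \<zeta> \<noteq> 1"
  shows "8 * (\<Sum>n\<in>Aset. \<zeta> ^ n) =
    - (Ksum \<alpha> (psi \<zeta>) + 1) - \<i> * (\<i> ^ (T div 2) * (Ksum \<alpha> (psi (\<i> * \<zeta>)) + 1))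
    + ((-1) ^ (T div 2) * (Ksum \<alpha> (psi (- \<zeta>)) + 1)) + \<i> * ((-\<i>) ^ (T div 2) * (Ksum \<alpha> (psi (- \<i> * \<zeta>)) + 1))"
proof -
  have w1: "(\<i> * \<zeta>) ^ T = 1" "(- \<zeta>) ^ T = 1" "(- \<i> * \<zeta>) ^ T = 1"
    using z i4 ev by (simp_all add: power_mult_distrib)
  have "8 * (\<Sum>n\<in>Aset. \<zeta> ^ n) = (\<Sum>n<T. 2 * of_nat (slce \<alpha> n) * (4 * (if n mod 4 = 3 then \<zeta> ^ n else 0)))"
    unfolding A_eq sum_distrib_left by (rule sum.cong[OF refl]) simp
  also have "\<dots> = (\<Sum>n<T. 2 * of_nat (slce \<alpha> n) * (\<zeta> ^ n + \<i> * (\<i> * \<zeta>) ^ n - (- \<zeta>) ^ n - \<i> * (- \<i> * \<zeta>) ^ n))"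
  proof (rule sum.cong[OF refl])
    fix n
    have "\<zeta> ^ n + \<i> * (\<i> * \<zeta>) ^ n - (- \<zeta>) ^ n - \<i> * (- \<i> * \<zeta>) ^ n
        = \<zeta> ^ n * (1 + \<i> * \<i> ^ n - (-1) ^ n - \<i> * (- \<i>) ^ n)"
      by (simp only: power_mult_distrib[of "\<i>" \<zeta>] power_mult_distrib[of "- \<i>" \<zeta>]
            power_mult_distrib[of "-1" \<zeta>, simplified]) (simp add: algebra_simps)
    also have "\<dots> = 4 * (if n mod 4 = 3 then \<zeta> ^ n else 0)" unfolding indic by simp
    finally show "2 * of_nat (slce \<alpha> n) * (4 * (if n mod 4 = 3 then \<zeta> ^ n else 0)) =
        2 * of_nat (slce \<alpha> n) * (\<zeta> ^ n + \<i> * (\<i> * \<zeta>) ^ n - (- \<zeta>) ^ n - \<i> * (- \<i> * \<zeta>) ^ n)" by simp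
  qed
  also have "\<dots> = (\<Sum>n<T. 2 * of_nat (slce \<alpha> n) * \<zeta> ^ n) + \<i> * (\<Sum>n<T. 2 * of_nat (slce \<alpha> n) * (\<i> * \<zeta>) ^ n)
     - (\<Sum>n<T. 2 * of_nat (slce \<alpha> n) * (- \<zeta>) ^ n) - \<i> * (\<Sum>n<T. 2 * of_nat (slce \<alpha> n) * (- \<i> * \<zeta>) ^ n)"
    by (simp add: sum_distrib_left sum_subtractf sum.distrib algebra_simps)
  also have "\<dots> = - (\<zeta> ^ (T div 2)) * (Ksum \<alpha> (psi \<zeta>) + 1) + \<i> * (- ((\<i> * \<zeta>) ^ (T div 2)) * (Ksum \<alpha> (psi (\<i> * \<zeta>)) + 1))
     - (- ((- \<zeta>) ^ (T div 2)) * (Ksum \<alpha> (psi (- \<zeta>)) + 1)) - \<i> * (- ((- \<i> * \<zeta>) ^ (T div 2)) * (Ksum \<alpha> (psi (- \<i> * \<zeta>)) + 1))"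
    using G_eq[OF ev z(1) ne(1)] G_eq[OF ev w1(1) ne(2)] G_eq[OF ev w1(2) ne(3)] G_eq[OF ev w1(3) ne(4)]
    by simp
  also have "\<dots> = - (Ksum \<alpha> (psi \<zeta>) + 1) - \<i> * (\<i> ^ (T div 2) * (Ksum \<alpha> (psi (\<i> * \<zeta>)) + 1))
    + ((-1) ^ (T div 2) * (Ksum \<alpha> (psi (- \<zeta>)) + 1)) + \<i> * ((-\<i>) ^ (T div 2) * (Ksum \<alpha> (psi (- \<i> * \<zeta>)) + 1))"
  proof -
    have "(- (\<i> * \<zeta>)) ^ (T div 2) = (- \<i>) ^ (T div 2) * \<zeta> ^ (T div 2)"
      by (metis mult_minus_left power_mult_distrib)
    then show ?thesis using z(2) by (simp add: power_mult_distrib power_minus[of \<zeta>] algebra_simps)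
  qed
  finally show ?thesis .
qed

end

lemma coset_eq: assumes "is_ideal R P" shows "coset P x = coset P y \<longleftrightarrow> x - y \<in> P"
proof
  have add: "\<And>u v. u \<in> P \<Longrightarrow> v \<in> P \<Longrightarrow> u + v \<in> P" and neg: "\<And>u. u \<in> P \<Longrightarrow> - u \<in> P"
    and z: "0 \<in> P" using assms by (auto simp: is_ideal_def)
  {
    assume "coset P x = coset P y"
    then have "x \<in> coset P y" using z by (metis add_0_right coset_def image_eqI)
    then obtain p where "p \<in> P" "x = y + p" by (auto simp: coset_def)
    then show "x - y \<in> P" by simp
  }
  {
    assume d: "x - y \<in> P"
    show "coset P x = coset P y"
    proof
      show "coset P x \<subseteq> coset P y"
      proof
        fix u assume "u \<in> coset P x"
        then obtain p where p: "p \<in> P" "u = x + p" by (auto simp: coset_def)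
        then have "u = y + ((x - y) + p)" "(x - y) + p \<in> P" using add d by auto
        then show "u \<in> coset P y" unfolding coset_def by (rule image_eqI)
      qed
      show "coset P y \<subseteq> coset P x"
      proof
        fix u assume "u \<in> coset P y"
        then obtain p where p: "p \<in> P" "u = y + p" by (auto simp: coset_def)
        moreover have "- (x - y) + p \<in> P" using add neg d p(1) by blast
        ultimately have "u = x + (- (x - y) + p)" "- (x - y) + p \<in> P" by auto
        then show "u \<in> coset P x" unfolding coset_def by (rule image_eqI)
      qed
    qed
  }
qed

lemma exp_int_shift: "exp (y + of_nat m * (2 * of_real pi * \<i>)) = exp y"
proof -
  have "exp (2 * of_real pi * \<i>) = 1" using exp_two_pi_i' by (simp add: mult.commute)
  then show ?thesis by (simp add: exp_add exp_of_nat_mult)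
qed

lemma zeta4k: assumes "odd k"
  shows "zetaN (4 * k) = zetaN k ^ ((k div 2 + 1)^2) * \<i> ^ k"
proof -
  define r where "r = k div 2"
  have k: "k = 2 * r + 1" using assms r_def by presburger
  define c where "c = (2 * of_real pi * \<i> :: complex)"
  have c: "c \<noteq> 0" by (simp add: c_def)
  have nat: "4 * (r + 1)^2 + k^2 = 1 + 4 * k * (r + 1)" unfolding k by (simp add: power2_eq_square algebra_simps)
  have natc: "4 * of_nat ((r + 1)^2) + (of_nat k)^2 = (1 + 4 * of_nat k * of_nat (r + 1) :: complex)"
    using arg_cong[OF nat, of "of_nat :: nat \<Rightarrow> complex"] by (simp add: algebra_simps)
  have "k \<noteq> 0" using k by simp
  then have kz: "(of_nat k :: complex) \<noteq> 0" by (metis of_nat_eq_0_iff)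
  have e1: "zetaN k ^ ((r + 1)^2) = exp (of_nat ((r+1)^2) * (c / of_nat k))"
    by (simp only: zetaN_def exp_of_nat_mult c_def)
  have e2: "\<i> ^ k = exp (of_nat k * (c / 4))"
  proof -
    have "c / 4 = \<i> * complex_of_real (pi/2)" by (simp add: c_def)
    then show ?thesis by (simp only: exp_of_nat_mult exp_ihalf)
  qed
  have eq: "of_nat ((r+1)^2) * (c / of_nat k) + of_nat k * (c / 4) = c / (4 * of_nat k) + of_nat (r + 1) * c"
  proof -
    have "of_nat ((r+1)^2) * (c / of_nat k) + of_nat k * (c / 4)
        = c * (4 * of_nat ((r + 1)^2) + (of_nat k)^2) / (4 * of_nat k)"
      using kz by (simp add: field_simps power2_eq_square)
    also have "\<dots> = c * (1 + 4 * of_nat k * of_nat (r + 1)) / (4 * of_nat k)" unfolding natc ..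
    also have "\<dots> = c / (4 * of_nat k) + of_nat (r + 1) * c" using kz by (simp add: field_simps)
    finally show ?thesis .
  qed
  have "zetaN k ^ ((r + 1)^2) * \<i> ^ k = exp (c / (4 * of_nat k) + of_nat (r + 1) * c)"
    unfolding e1 e2 exp_add[symmetric] eq ..
  also have "\<dots> = exp (c / (4 * of_nat k))" unfolding c_def by (rule exp_int_shift)
  also have "\<dots> = zetaN (4 * k)" by (simp add: zetaN_def c_def)
  finally show ?thesis using r_def by simp
qed

lemma zeta4k_pow_k: assumes "k > 0" shows "zetaN (4 * k) ^ k = \<i>"
proof -
  have a: "of_nat k * (2 * of_real pi * \<i> / of_nat (4 * k)) = \<i> * complex_of_real (pi/2)"
    using assms by (simp add: field_simps)
  have "zetaN (4 * k) ^ k = exp (of_nat k * (2 * of_real pi * \<i> / of_nat (4 * k)))"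
    by (simp only: zetaN_def exp_of_nat_mult)
  then show ?thesis unfolding a exp_ihalf .
qed

lemma zeta4k_pow_4: assumes "k > 0" shows "zetaN (4 * k) ^ 4 = zetaN k"
proof -
  have a: "of_nat 4 * (2 * of_real pi * \<i> / of_nat (4 * k)) = 2 * of_real pi * \<i> / of_nat k"
    using assms by (simp add: field_simps)
  have "zetaN (4 * k) ^ 4 = exp (of_nat 4 * (2 * of_real pi * \<i> / of_nat (4 * k)))"
    by (simp only: zetaN_def exp_of_nat_mult)
  then show ?thesis unfolding a zetaN_def .
qed

lemma i_in: assumes "k > 0" shows "\<i> \<in> cyc_int (4 * k)"
proof -
  have "zetaN (4*k) ^ k \<in> ip (zetaN (4*k))" by (rule ip_pow[OF ip_z])
  then show ?thesis unfolding cyc_ip zeta4k_pow_k[OF assms] .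
qed

lemma cyc_sub: assumes "k > 0" shows "cyc_int k \<subseteq> cyc_int (4 * k)"
proof -
  have "zetaN (4*k) ^ 4 \<in> ip (zetaN (4*k))" by (rule ip_pow[OF ip_z])
  then show ?thesis unfolding cyc_ip zeta4k_pow_4[OF assms] by (rule ip_sub)
qed

lemma decomp: assumes "odd k"
  shows "cyc_int (4 * k) \<subseteq> {c + d * \<i> | c d. c \<in> cyc_int k \<and> d \<in> cyc_int k}"
proof
  fix x assume "x \<in> cyc_int (4 * k)"
  then obtain g where x: "x = poly (map_poly of_int g) (zetaN (4 * k))" unfolding cyc_ip ip_def by auto
  define s :: complex where "s = (if k mod 4 = 1 then 1 else -1)"
  have s: "s \<in> cyc_int k" unfolding s_def cyc_ip using ip_1 ip_uminus by auto
  have ik: "\<i> ^ k = s * \<i>"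
  proof -
    have m: "\<i> ^ k = \<i> ^ (k mod 4)" by (rule i_pow_mod)
    have i3: "\<i> ^ 3 = - \<i>" by (simp add: eval_nat_numeral)
    have "k mod 4 = 1 \<or> k mod 4 = 3" using assms by presburger
    then show ?thesis
    proof
      assume h: "k mod 4 = 1" then show ?thesis unfolding m h s_def by simp
    next
      assume h: "k mod 4 = 3" then show ?thesis unfolding m h s_def i3 by simp
    qed
  qed
  define e where "e = s * zetaN k ^ ((k div 2 + 1)^2)"
  have e: "e \<in> cyc_int k" unfolding e_def using s by (simp add: cyc_ip ip_mult ip_pow ip_z)
  have z4: "zetaN (4 * k) = e * \<i>" unfolding zeta4k[OF assms] e_def ik by simp
  have "poly (map_poly of_int g) (zetaN (4 * k)) \<in> {c + d * \<i> | c d. c \<in> cyc_int k \<and> d \<in> cyc_int k}" for g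
  proof (induction g)
    case 0 then show ?case using ip_0[of "zetaN k"] by (auto simp: cyc_ip intro!: exI[of _ 0])
  next
    case (pCons a g)
    then obtain c d where cd: "poly (map_poly of_int g) (zetaN (4 * k)) = c + d * \<i>" "c \<in> cyc_int k" "d \<in> cyc_int k"
      by auto
    have "poly (map_poly of_int (pCons a g)) (zetaN (4 * k)) = of_int a + zetaN (4 * k) * poly (map_poly of_int g) (zetaN (4 * k))"
      by (simp add: map_poly_pCons)
    also have "\<dots> = of_int a + (e * \<i>) * (c + d * \<i>)" by (subst cd(1), subst z4, rule refl)
    also have "\<dots> = (of_int a - e * d) + (e * c) * \<i>" by (simp add: algebra_simps)
    finally have "poly (map_poly of_int (pCons a g)) (zetaN (4 * k)) = (of_int a - e * d) + (e * c) * \<i>" .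
    moreover have "of_int a - e * d \<in> cyc_int k" "e * c \<in> cyc_int k"
      using cd e unfolding cyc_ip by (simp_all add: ip_diff ip_of_int ip_mult)
    ultimately show ?case by blast
  qed
  then show "x \<in> {c + d * \<i> | c d. c \<in> cyc_int k \<and> d \<in> cyc_int k}" using x by simp
qed

lemma span_sub: assumes k: "odd k" and P: "is_ideal (cyc_int k) P"
  shows "ideal_span (cyc_int (4 * k)) ((\<lambda>x. 8 * x) ` P) \<subseteq> {8 * a + 8 * b * \<i> | a b. a \<in> P \<and> b \<in> P}"
    (is "_ \<subseteq> ?J")
proof -
  have kp: "k > 0" using k by presburger
  have PR: "P \<subseteq> cyc_int k" and add: "\<And>u v. u \<in> P \<Longrightarrow> v \<in> P \<Longrightarrow> u + v \<in> P"
    and neg: "\<And>u. u \<in> P \<Longrightarrow> - u \<in> P" and z: "0 \<in> P"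
    and mul: "\<And>r u. r \<in> cyc_int k \<Longrightarrow> u \<in> P \<Longrightarrow> r * u \<in> P"
    using P by (auto simp: is_ideal_def)
  have diff: "\<And>u v. u \<in> P \<Longrightarrow> v \<in> P \<Longrightarrow> u - v \<in> P" using add neg by (metis diff_conv_add_uminus)
  have "is_ideal (cyc_int (4 * k)) ?J"
    unfolding is_ideal_def
  proof (intro conjI ballI)
    show "?J \<subseteq> cyc_int (4 * k)"
    proof
      fix x assume "x \<in> ?J"
      then obtain a b where ab: "x = 8 * a + 8 * b * \<i>" "a \<in> P" "b \<in> P" by auto
      have "a \<in> ip (zetaN (4*k))" "b \<in> ip (zetaN (4*k))" "\<i> \<in> ip (zetaN (4*k))"
        using ab PR cyc_sub[OF kp] i_in[OF kp] by (auto simp: cyc_ip)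
      moreover have "(8::complex) \<in> ip (zetaN (4*k))" using ip_of_int[of 8] by simp
      ultimately have "8 * a + 8 * b * \<i> \<in> ip (zetaN (4*k))"
        by (intro ip_add ip_mult)
      then show "x \<in> cyc_int (4 * k)" using ab by (simp add: cyc_ip)
    qed
    have "(0::complex) = 8 * 0 + 8 * 0 * \<i>" by simp
    then show "0 \<in> ?J" using z by blast
    fix x assume "x \<in> ?J"
    then obtain a b where ab: "x = 8 * a + 8 * b * \<i>" "a \<in> P" "b \<in> P" by auto
    have "- x = 8 * (-a) + 8 * (-b) * \<i>" using ab by simp
    then show "- x \<in> ?J" using ab neg by blast
    { fix y assume "y \<in> ?J"
      then obtain a' b' where ab': "y = 8 * a' + 8 * b' * \<i>" "a' \<in> P" "b' \<in> P" by auto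
      have "x + y = 8 * (a + a') + 8 * (b + b') * \<i>" using ab ab' by (simp add: algebra_simps)
      moreover have "a + a' \<in> P" "b + b' \<in> P" using ab ab' add by auto
      ultimately show "x + y \<in> ?J" by blast }
    { fix r assume "r \<in> cyc_int (4 * k)"
      then obtain c d where cd: "r = c + d * \<i>" "c \<in> cyc_int k" "d \<in> cyc_int k" using decomp[OF k] by blast
      have "r * x = 8 * (c * a - d * b) + 8 * (c * b + d * a) * \<i>"
        unfolding cd ab by (simp add: algebra_simps)
      moreover have "c * a - d * b \<in> P" using cd ab mul diff by blast
      moreover have "c * b + d * a \<in> P" using cd ab mul add by blast
      ultimately show "r * x \<in> ?J" by blast }
  qed
  moreover have "(\<lambda>x. 8 * x) ` P \<subseteq> ?J"
  proof
    fix y assume "y \<in> (\<lambda>x. 8 * x) ` P"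
    then obtain a where a: "a \<in> P" "y = 8 * a" by auto
    then have "y = 8 * a + 8 * 0 * \<i>" by simp
    then show "y \<in> ?J" using a z by blast
  qed
  ultimately show ?thesis unfolding ideal_span_def by blast
qed

lemma choose23: "(odd (n choose 2) \<longleftrightarrow> n mod 4 = 2 \<or> n mod 4 = 3) \<and> (odd (n choose 3) \<longleftrightarrow> n mod 4 = 3)"
proof (induction n)
  case 0 then show ?case by (simp add: binomial_eq_0)
next
  case (Suc n)
  have e2: "Suc n choose 2 = n + (n choose 2)" by (simp add: numeral_eq_Suc)
  have e3: "Suc n choose 3 = (n choose 2) + (n choose 3)" by (simp add: numeral_eq_Suc)
  define A where "A = n choose 2"
  define B where "B = n choose 3"
  have IH: "(odd A \<longleftrightarrow> n mod 4 = 2 \<or> n mod 4 = 3) \<and> (odd B \<longleftrightarrow> n mod 4 = 3)"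
    using Suc unfolding A_def B_def .
  have "(odd (n + A) \<longleftrightarrow> Suc n mod 4 = 2 \<or> Suc n mod 4 = 3) \<and> (odd (A + B) \<longleftrightarrow> Suc n mod 4 = 3)"
    using IH by presburger
  then show ?case unfolding e2 e3 A_def B_def .
qed

lemma choose3_odd: "odd (n choose 3) \<longleftrightarrow> n mod 4 = 3" using choose23 by blast

context ff begin

lemma hasse_eq: fixes \<beta> :: "'b::field" assumes c2: "(2::'b) = 0"
  shows "hasse_eval (slce \<alpha>) T 3 \<beta> * \<beta> ^ 3 = (\<Sum>n\<in>Aset. \<beta> ^ n)"
proof -
  have "hasse_eval (slce \<alpha>) T 3 \<beta> * \<beta> ^ 3 = (\<Sum>n\<in>{3..<T}. of_nat (((n choose 3) * slce \<alpha> n) mod 2) * \<beta> ^ n)"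
    unfolding hasse_eval_def sum_distrib_right
  proof (rule sum.cong[OF refl])
    fix n assume "n \<in> {3..<T}"
    then have "\<beta> ^ (n - 3) * \<beta> ^ 3 = \<beta> ^ n" by (simp add: power_add[symmetric])
    then show "of_nat (((n choose 3) * slce \<alpha> n) mod 2) * \<beta> ^ (n - 3) * \<beta> ^ 3 =
      of_nat (((n choose 3) * slce \<alpha> n) mod 2) * \<beta> ^ n" by (simp add: mult.assoc)
  qed
  also have "\<dots> = (\<Sum>n\<in>{3..<T}. if n mod 4 = 3 \<and> slce \<alpha> n = 1 then \<beta> ^ n else 0)"
  proof (rule sum.cong[OF refl])
    fix n
    have "((n choose 3) * slce \<alpha> n) mod 2 = (if n mod 4 = 3 \<and> slce \<alpha> n = 1 then 1 else 0)"
      using slce01[of n] choose3_odd[of n] by (auto simp: odd_iff_mod_2_eq_one even_iff_mod_2_eq_zero)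
    then show "of_nat (((n choose 3) * slce \<alpha> n) mod 2) * \<beta> ^ n = (if n mod 4 = 3 \<and> slce \<alpha> n = 1 then \<beta> ^ n else 0)"
      by simp
  qed
  also have "\<dots> = (\<Sum>n\<in>Aset. \<beta> ^ n)"
  proof -
    have e: "Aset = {n \<in> {3..<T}. n mod 4 = 3 \<and> slce \<alpha> n = 1}" unfolding Aset_def by auto
    show ?thesis by (simp only: e sum.inter_filter[OF finite_atLeastLessThan])
  qed
  finally show ?thesis .
qed

end

locale phis =
  fixes \<phi> :: "'b::field \<Rightarrow> complex set" and \<beta> :: 'b and R P :: "complex set" and \<zeta> :: complex
  assumes iso: "quot_iso \<phi> (ip \<beta>) R P"
    and PI: "is_ideal R P"
    and Radd: "\<And>x y. x \<in> R \<Longrightarrow> y \<in> R \<Longrightarrow> x + y \<in> R"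
    and zb: "\<phi> \<beta> = coset P \<zeta>"
begin

lemma z0: "0 \<in> P" using PI by (simp add: is_ideal_def)
lemma PR: "P \<subseteq> R" using PI by (simp add: is_ideal_def)
lemma mem_coset: "x \<in> coset P x"
  unfolding coset_def by (rule image_eqI[of _ _ 0]) (simp_all add: z0)

lemma rep: assumes "a \<in> ip \<beta>" obtains r where "r \<in> R" "\<phi> a = coset P r"
proof -
  have "\<phi> ` ip \<beta> = coset P ` R" using iso by (simp add: quot_iso_def bij_betw_def quot_set_def)
  moreover have "\<phi> a \<in> \<phi> ` ip \<beta>" using assms by (rule imageI)
  ultimately have "\<phi> a \<in> coset P ` R" by simp
  then show ?thesis using that by blast
qed

lemma hom: "\<forall>a\<in>ip \<beta>. \<forall>b\<in>ip \<beta>. \<forall>x\<in>\<phi> a. \<forall>y\<in>\<phi> b.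
        \<phi> (a + b) = coset P (x + y) \<and> \<phi> (a * b) = coset P (x * y)"
  using iso unfolding quot_iso_def by blast

lemma padd: assumes "a \<in> ip \<beta>" "b \<in> ip \<beta>" "\<phi> a = coset P x" "\<phi> b = coset P y"
  shows "\<phi> (a + b) = coset P (x + y)"
proof -
  have "x \<in> \<phi> a" "y \<in> \<phi> b" using assms(3,4) mem_coset by auto
  then show ?thesis using hom assms(1,2) by blast
qed

lemma pmul: assumes "a \<in> ip \<beta>" "b \<in> ip \<beta>" "\<phi> a = coset P x" "\<phi> b = coset P y"
  shows "\<phi> (a * b) = coset P (x * y)"
proof -
  have "x \<in> \<phi> a" "y \<in> \<phi> b" using assms(3,4) mem_coset by auto
  then show ?thesis using hom assms(1,2) by blast
qed

lemma zR: "\<zeta> \<in> R"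
proof -
  obtain r where r: "r \<in> R" "\<phi> \<beta> = coset P r" using rep[OF ip_z] .
  then have "\<zeta> - r \<in> P" using zb coset_eq[OF PI, of \<zeta> r] by simp
  then have "(\<zeta> - r) + r \<in> R" using PR r Radd by blast
  then show ?thesis by simp
qed

lemma p0: "\<phi> 0 = coset P 0"
proof -
  obtain r where r: "r \<in> R" "\<phi> 0 = coset P r" using rep[OF ip_0] .
  have "\<phi> (0 + 0) = coset P (r + r)" by (rule padd[OF ip_0 ip_0 r(2) r(2)])
  then have "coset P r = coset P (r + r)" using r by simp
  then have "r - (r + r) \<in> P" using coset_eq[OF PI, of r "r + r"] by simp
  then have "- (r - (r + r)) \<in> P" using PI unfolding is_ideal_def by blast
  moreover have "- (r - (r + r)) = r - 0" by simp
  ultimately have "r - 0 \<in> P" by simp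
  then show ?thesis using r coset_eq[OF PI, of r 0] by simp
qed

lemma psuc: "\<phi> (\<beta> ^ Suc n) = coset P (\<zeta> ^ Suc n)"
proof (induction n)
  case 0 then show ?case using zb by simp
next
  case (Suc n)
  have "\<phi> (\<beta> * \<beta> ^ Suc n) = coset P (\<zeta> * \<zeta> ^ Suc n)"
    by (rule pmul[OF ip_z ip_pow[OF ip_z] zb Suc])
  then show ?case by simp
qed

lemma psum: assumes "finite N" "0 \<notin> N"
  shows "\<phi> (\<Sum>n\<in>N. \<beta> ^ n) = coset P (\<Sum>n\<in>N. \<zeta> ^ n)"
  using assms
proof (induction N rule: finite_induct)
  case empty then show ?case using p0 by simp
next
  case (insert n N)
  then obtain m where m: "n = Suc m" by (cases n) auto
  have "\<phi> (\<beta> ^ n + (\<Sum>n\<in>N. \<beta> ^ n)) = coset P (\<zeta> ^ n + (\<Sum>n\<in>N. \<zeta> ^ n))"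
  proof (rule padd)
    show "\<beta> ^ n \<in> ip \<beta>" by (rule ip_pow[OF ip_z])
    show "(\<Sum>n\<in>N. \<beta> ^ n) \<in> ip \<beta>" by (rule ip_sum) (rule ip_pow[OF ip_z])
    show "\<phi> (\<beta> ^ n) = coset P (\<zeta> ^ n)" using psuc m by simp
    show "\<phi> (\<Sum>n\<in>N. \<beta> ^ n) = coset P (\<Sum>n\<in>N. \<zeta> ^ n)" using insert by simp
  qed
  then show ?case using insert by simp
qed

lemma inj0: assumes "a \<in> ip \<beta>" shows "a = 0 \<longleftrightarrow> \<phi> a = coset P 0"
proof -
  have "inj_on \<phi> (ip \<beta>)" using iso by (simp add: quot_iso_def bij_betw_def)
  then have "a = 0 \<longleftrightarrow> \<phi> a = \<phi> 0" using assms ip_0 by (auto simp: inj_on_def)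
  then show ?thesis using p0 by simp
qed

end

lemma final_equiv:
  assumes k: "odd k" and P: "is_prime_ideal (cyc_int k) P" and A: "A \<in> cyc_int k" and C: "C = - 8 * A"
  shows "C \<in> ideal_span (cyc_int (4 * k)) ((\<lambda>x. 8 * x) ` P) \<longleftrightarrow> A \<in> P"
proof
  have PI: "is_ideal (cyc_int k) P" using P by (simp add: is_prime_ideal_def)
  then have PR: "P \<subseteq> cyc_int k" and neg: "\<And>u. u \<in> P \<Longrightarrow> - u \<in> P"
    and add: "\<And>u v. u \<in> P \<Longrightarrow> v \<in> P \<Longrightarrow> u + v \<in> P"
    and mul: "\<And>r u. r \<in> cyc_int k \<Longrightarrow> u \<in> P \<Longrightarrow> r * u \<in> P"
    by (auto simp: is_ideal_def)
  have prime: "\<And>a b. a \<in> cyc_int k \<Longrightarrow> b \<in> cyc_int k \<Longrightarrow> a * b \<in> P \<Longrightarrow> a \<in> P \<or> b \<in> P"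
    using P by (simp add: is_prime_ideal_def)
  {
    assume "C \<in> ideal_span (cyc_int (4 * k)) ((\<lambda>x. 8 * x) ` P)"
    then have "C \<in> {8 * a + 8 * b * \<i> | a b. a \<in> P \<and> b \<in> P}" using span_sub[OF k PI] by blast
    then obtain a b where ab: "C = 8 * a + 8 * b * \<i>" "a \<in> P" "b \<in> P" by blast
    have h: "- 8 * A = 8 * a + 8 * b * \<i>" using ab(1) C by simp
    have "8 * (A + a + b * \<i>) = 8 * A + (8 * a + 8 * b * \<i>)" by (simp add: algebra_simps)
    also have "\<dots> = 8 * A + (- 8 * A)" by (simp only: h)
    also have "\<dots> = 0" by simp
    finally have "8 * (A + a + b * \<i>) = 0" .
    then have "A + a + b * \<i> = 0" by (simp only: mult_eq_0_iff) simp
    then have "A + a = - b * \<i>" by (simp add: eq_neg_iff_add_eq_0)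
    then have sq: "(A + a) * (A + a) = (- b) * b" by (simp add: algebra_simps)
    have "(- b) * b \<in> P" using mul[OF _ ab(3)] neg[OF ab(3)] PR by blast
    moreover have Aa: "A + a \<in> cyc_int k" using A ab(2) PR by (simp add: cyc_ip ip_add subset_iff)
    ultimately have "A + a \<in> P" using prime[OF Aa Aa] sq by auto
    then have "(A + a) + (- a) \<in> P" using add neg ab(2) by blast
    then show "A \<in> P" by simp
  }
  {
    assume "A \<in> P"
    then have "8 * (- A) \<in> (\<lambda>x. 8 * x) ` P" using neg by blast
    then have "C \<in> (\<lambda>x. 8 * x) ` P" using C by simp
    then show "C \<in> ideal_span (cyc_int (4 * k)) ((\<lambda>x. 8 * x) ` P)" unfolding ideal_span_def by blast
  }
qed

lemma unit_ne: assumes "(\<zeta>::complex) ^ k = 1" "odd k" "\<zeta> \<noteq> 1" "u ^ 4 = 1" shows "u * \<zeta> \<noteq> 1"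
proof
  assume h: "u * \<zeta> = 1"
  have z4: "\<zeta> ^ 4 = 1" using h assms(4) by (metis mult_1 power_mult_distrib power_one)
  have "\<zeta> ^ k = \<zeta> ^ (4 * (k div 4) + k mod 4)" by simp
  also have "\<dots> = \<zeta> ^ (k mod 4)" by (simp only: power_add power_mult z4) simp
  finally have zk: "\<zeta> ^ (k mod 4) = 1" using assms(1) by simp
  have "k mod 4 = 1 \<or> k mod 4 = 3" using assms(2) by presburger
  then show False
  proof
    assume "k mod 4 = 1" then show False using zk assms(3) by simp
  next
    assume "k mod 4 = 3"
    then have "\<zeta> ^ 3 = 1" using zk by simp
    then have "\<zeta> ^ 4 = \<zeta>" by (simp add: eval_nat_numeral)
    then show False using z4 assms(3) by simp
  qed
qed

lemma dvd_odd2: assumes "odd k" "k dvd 2 * x" shows "k dvd (x::nat)"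
proof -
  obtain c where c: "2 * x = k * c" using assms(2) by blast
  then have "even (k * c)" by presburger
  then have "even c" using assms(1) by simp
  then obtain d where "c = 2 * d" by blast
  then have "x = k * d" using c by simp
  then show ?thesis by simp
qed


lemma alg1: fixes a b c d :: complex
  shows "a + \<i> * b - c - \<i> * d = - (- (a + 1) - \<i> * (1 * (b + 1)) + (1 * (c + 1)) + \<i> * (1 * (d + 1)))"
  by (simp add: algebra_simps)

lemma alg2: fixes a b c d :: complex
  shows "a - \<i> * b - c + \<i> * d = - (- (a + 1) - \<i> * ((-1) * (b + 1)) + (1 * (c + 1)) + \<i> * ((-1) * (d + 1)))"
  by (simp add: algebra_simps)


lemma fin1: fixes a b c d A u v w :: complex
  assumes "8*A = -(a+1) - \<i>*(u*(b+1)) + (v*(c+1)) + \<i>*(w*(d+1))" "u = 1" "v = 1" "w = 1"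
  shows "a + \<i>*b - c - \<i>*d = -(8*A)"
  using assms by (simp add: algebra_simps)
lemma fin2: fixes a b c d A u v w :: complex
  assumes "8*A = -(a+1) - \<i>*(u*(b+1)) + (v*(c+1)) + \<i>*(w*(d+1))" "u = -1" "v = 1" "w = -1"
  shows "a - \<i>*b - c + \<i>*d = -(8*A)"
  using assms by (simp add: algebra_simps)

lemma m8a: assumes "(q::nat) mod 8 = 1" shows "(q - 1) div 2 mod 4 = 0"
proof -
  have "q = 8 * (q div 8) + 1" using assms by (metis div_mult_mod_eq mult.commute)
  then have "(q - 1) div 2 = 4 * (q div 8)" by simp
  then show ?thesis by simp
qed
lemma m8b: assumes "(q::nat) mod 4 = 1" "q mod 8 \<noteq> 1" shows "(q - 1) div 2 mod 4 = 2"
proof -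
  have "q mod 8 mod 4 = 1" using assms(1) by (simp add: mod_mod_cancel)
  moreover have "q mod 8 < 8" by simp
  ultimately have "q mod 8 = 5"
  proof -
    assume a: "q mod 8 mod 4 = 1" "q mod 8 < 8"
    define r where "r = q mod 8"
    have r: "r = 4 * (r div 4) + 1" using a(1) unfolding r_def by (metis div_mult_mod_eq mult.commute)
    have "r div 4 \<noteq> 0" using r assms(2) r_def by auto
    moreover have "r div 4 < 2" using r a(2) r_def by linarith
    ultimately have "r div 4 = 1" by linarith
    then show ?thesis using r r_def by simp
  qed
  then have "q = 8 * (q div 8) + 5" by (metis div_mult_mod_eq mult.commute)
  then have e: "(q - 1) div 2 = 2 + (q div 8) * 4" by simp
  show ?thesis by (simp only: e mod_mult_self1) simp
qed

theorem mainTheorem5: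
  fixes p m :: nat and \<alpha> :: "'a::{field,finite}" and \<beta> :: "'b::field" and k :: nat
    and P :: "complex set" and \<phi> :: "'b \<Rightarrow> complex set" and \<zeta> :: complex
  assumes p: "prime p" "odd p" and m: "m \<ge> 1" and q: "card (UNIV::'a set) = p ^ m"
    and alpha: "primitive_elem \<alpha>"
    and char2: "(2::'b) = 0"
    and betaT: "\<beta> ^ (card (UNIV::'a set) - 1) = 1" and ord: "mult_order \<beta> k" and k1: "k > 1"
    and P: "is_prime_ideal (cyc_int k) P" "2 \<in> P"
    and phi: "quot_iso \<phi> (F2_adj \<beta>) (cyc_int k) P"
    and zeta: "\<zeta> ^ k = 1" "\<phi> \<beta> = coset P \<zeta>"
    and q4: "card (UNIV::'a set) mod 4 = 1"
  shows "hasse_eval (slce \<alpha>) (card (UNIV::'a set) - 1) 3 \<beta> = 0 \<longleftrightarrow>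
    (if card (UNIV::'a set) mod 8 = 1 then
       Ksum \<alpha> (chi \<alpha> \<zeta>) + zetaN 4 * Ksum \<alpha> (\<lambda>x. eta \<alpha> (1/4) x * chi \<alpha> \<zeta> x)
       - Ksum \<alpha> (\<lambda>x. eta \<alpha> (1/2) x * chi \<alpha> \<zeta> x) - zetaN 4 * Ksum \<alpha> (\<lambda>x. eta \<alpha> (3/4) x * chi \<alpha> \<zeta> x)
       \<in> ideal_span (cyc_int (4 * k)) ((\<lambda>x. 8 * x) ` P)
     else
       Ksum \<alpha> (chi \<alpha> \<zeta>) - zetaN 4 * Ksum \<alpha> (\<lambda>x. eta \<alpha> (1/4) x * chi \<alpha> \<zeta> x)
       - Ksum \<alpha> (\<lambda>x. eta \<alpha> (1/2) x * chi \<alpha> \<zeta> x) + zetaN 4 * Ksum \<alpha> (\<lambda>x. eta \<alpha> (3/4) x * chi \<alpha> \<zeta> x)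
       \<in> ideal_span (cyc_int (4 * k)) ((\<lambda>x. 8 * x) ` P))"
proof -
  define T where "T = card (UNIV::'a set) - 1"
  interpret ff \<alpha> T using alpha T_def by unfold_locales
  have q2: "card (UNIV::'a set) \<ge> 2" by (rule card_ge2)
  have T4: "T mod 4 = 0" using q4 q2 unfolding T_def by presburger
  have ev: "even T" using T4 by presburger
  have i4: "\<i> ^ T = 1" using i_pow_mod[of T] T4 by simp
  have Tpos: "T > 0" using T_pos .
  have kpos: "k > 0" and bk: "\<beta> ^ k = 1" and bmin: "\<And>d. 0 < d \<Longrightarrow> d < k \<Longrightarrow> \<beta> ^ d \<noteq> 1"
    using ord by (auto simp: mult_order_def)
  have bT: "\<beta> ^ T = 1" using betaT T_def by simp
  have b0: "\<beta> \<noteq> 0" using bT Tpos by (metis power_0_left zero_neq_one neq0_conv)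
  have kdvd: "k dvd T"
  proof -
    have "\<beta> ^ T = \<beta> ^ (k * (T div k) + T mod k)" by simp
    also have "\<dots> = \<beta> ^ (T mod k)" by (simp only: power_add power_mult bk) simp
    finally have "\<beta> ^ (T mod k) = 1" using bT by simp
    then have "T mod k = 0" using bmin[of "T mod k"] kpos by (meson mod_less_divisor neq0_conv)
    then show ?thesis by (simp add: dvd_eq_mod_eq_0)
  qed
  have kodd: "odd k"
  proof
    assume "even k"
    then obtain m where m: "k = 2 * m" by blast
    then have mpos: "0 < m" "m < k" using kpos by auto
    have e: "\<beta> ^ (2 * m) = \<beta> ^ m * \<beta> ^ m" by (simp only: mult_2 power_add)
    have "(\<beta> ^ m + 1) ^ 2 = \<beta> ^ (2 * m) + 2 * \<beta> ^ m + 1" unfolding e by (simp add: power2_eq_square algebra_simps)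
    also have "\<dots> = 1 + 1" using bk m char2 by simp
    also have "\<dots> = 0" using char2 by simp
    finally have "\<beta> ^ m + 1 = 0" by simp
    then have "\<beta> ^ m = - 1" by (simp add: eq_neg_iff_add_eq_0)
    moreover have "(-1::'b) = 1" using char2 by (simp add: eq_neg_iff_add_eq_0)
    ultimately show False using bmin[OF mpos] by simp
  qed
  have kdvd2: "k dvd T div 2" using dvd_odd2[OF kodd] kdvd ev by (metis dvd_mult_div_cancel)
  have PI: "is_ideal (cyc_int k) P" using P(1) by (simp add: is_prime_ideal_def)
  interpret phis \<phi> \<beta> "cyc_int k" P \<zeta>
    using phi PI zeta(2) by unfold_locales (auto simp: F2_ip cyc_ip intro: ip_add)
  have zRk: "\<zeta> \<in> cyc_int k" using zR .
  have zT: "\<zeta> ^ T = 1" using kdvd zeta(1) by (metis dvd_def power_mult power_one)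
  have zT2: "\<zeta> ^ (T div 2) = 1" using kdvd2 zeta(1) by (metis dvd_def power_mult power_one)
  have z1: "\<zeta> \<noteq> 1"
  proof
    assume z: "\<zeta> = 1"
    have "\<phi> (\<beta> * \<beta>) = coset P (\<zeta> * \<zeta>)" by (rule pmul[OF ip_z ip_z zeta(2) zeta(2)])
    then have "\<phi> (\<beta> * \<beta>) = \<phi> \<beta>" using z zeta(2) by simp
    moreover have "inj_on \<phi> (ip \<beta>)" using phi by (simp add: quot_iso_def bij_betw_def F2_ip)
    moreover have "\<beta> * \<beta> \<in> ip \<beta>" "\<beta> \<in> ip \<beta>" using ip_mult[OF ip_z ip_z] ip_z by auto
    ultimately have "\<beta> * \<beta> = \<beta>" unfolding inj_on_def by blast
    then have "\<beta> = 1" using b0 by simp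
    then show False using bmin[of 1] k1 by simp
  qed
  have ne: "\<zeta> \<noteq> 1" "\<i> * \<zeta> \<noteq> 1" "- \<zeta> \<noteq> 1" "- \<i> * \<zeta> \<noteq> 1"
    using z1 unit_ne[OF zeta(1) kodd z1, of \<i>] unit_ne[OF zeta(1) kodd z1, of "-1"]
      unit_ne[OF zeta(1) kodd z1, of "-\<i>"] by (simp_all add: eval_nat_numeral)
  note MI = main_id[OF ev zT zT2 i4 ne]
  have e14: "eta \<alpha> (1/4) = psi \<i>" by (simp only: eta_psi exp_quarter)
  have e12: "eta \<alpha> (1/2) = psi (-1)" by (simp only: eta_psi exp_half)
  have e34: "eta \<alpha> (3/4) = psi (-\<i>)" by (simp only: eta_psi exp_3quarter)
  have Kf1: "(\<lambda>x. eta \<alpha> (1/4) x * psi \<zeta> x) = psi (\<i> * \<zeta>)"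
    by (rule ext) (simp add: e14 chi_psi psi_def power_mult_distrib)
  have Kf2: "(\<lambda>x. eta \<alpha> (1/2) x * psi \<zeta> x) = psi (- \<zeta>)"
    by (rule ext) (simp add: e12 chi_psi psi_def power_mult_distrib[symmetric])
  have Kf3: "(\<lambda>x. eta \<alpha> (3/4) x * psi \<zeta> x) = psi (- \<i> * \<zeta>)"
    by (rule ext) (simp add: e34 chi_psi psi_def power_mult_distrib[symmetric])
  define A where "A = (\<Sum>n\<in>Aset. \<zeta> ^ n)"
  have AR: "A \<in> cyc_int k" unfolding A_def using zRk by (simp add: cyc_ip ip_sum ip_pow)
  have M: "8 * A = - (Ksum \<alpha> (psi \<zeta>) + 1) - \<i> * (\<i> ^ (T div 2) * (Ksum \<alpha> (psi (\<i> * \<zeta>)) + 1))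
    + ((-1) ^ (T div 2) * (Ksum \<alpha> (psi (- \<zeta>)) + 1)) + \<i> * ((-\<i>) ^ (T div 2) * (Ksum \<alpha> (psi (- \<i> * \<zeta>)) + 1))"
    using MI unfolding A_def .
  have fin: "finite Aset" "0 \<notin> Aset" unfolding Aset_def by auto
  have L: "hasse_eval (slce \<alpha>) T 3 \<beta> = 0 \<longleftrightarrow> A \<in> P"
  proof -
    have S: "(\<Sum>n\<in>Aset. \<beta> ^ n) \<in> ip \<beta>" by (rule ip_sum) (rule ip_pow[OF ip_z])
    have "hasse_eval (slce \<alpha>) T 3 \<beta> = 0 \<longleftrightarrow> hasse_eval (slce \<alpha>) T 3 \<beta> * \<beta> ^ 3 = 0" using b0 by simp
    also have "\<dots> \<longleftrightarrow> (\<Sum>n\<in>Aset. \<beta> ^ n) = 0" unfolding hasse_eq[OF char2] ..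
    also have "\<dots> \<longleftrightarrow> \<phi> (\<Sum>n\<in>Aset. \<beta> ^ n) = coset P 0" by (rule inj0[OF S])
    also have "\<dots> \<longleftrightarrow> coset P A = coset P 0" unfolding psum[OF fin] A_def ..
    also have "\<dots> \<longleftrightarrow> A \<in> P" using coset_eq[OF PI, of A 0] by simp
    finally show ?thesis .
  qed
  have Tq: "card (UNIV::'a set) - 1 = T" using T_def by simp
  show ?thesis
  proof (cases "card (UNIV::'a set) mod 8 = 1")
    case True
    have h: "T div 2 mod 4 = 0" unfolding T_def by (rule m8a[OF True])
    have p1: "\<i> ^ (T div 2) = 1" using i_pow_mod[of "T div 2"] h by simp
    have p2: "(-1::complex) ^ (T div 2) = 1" proof -
      have "even (T div 2)" using h by presburger
      then show ?thesis by simp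
    qed
    have p3: "(- \<i>) ^ (T div 2) = 1" using p1 p2 by (simp add: power_minus[of \<i>])
    have "Ksum \<alpha> (chi \<alpha> \<zeta>) + zetaN 4 * Ksum \<alpha> (\<lambda>x. eta \<alpha> (1/4) x * chi \<alpha> \<zeta> x)
       - Ksum \<alpha> (\<lambda>x. eta \<alpha> (1/2) x * chi \<alpha> \<zeta> x) - zetaN 4 * Ksum \<alpha> (\<lambda>x. eta \<alpha> (3/4) x * chi \<alpha> \<zeta> x)
       = - (8 * A)"
    proof -
      have "Ksum \<alpha> (chi \<alpha> \<zeta>) + zetaN 4 * Ksum \<alpha> (\<lambda>x. eta \<alpha> (1/4) x * chi \<alpha> \<zeta> x)
       - Ksum \<alpha> (\<lambda>x. eta \<alpha> (1/2) x * chi \<alpha> \<zeta> x) - zetaN 4 * Ksum \<alpha> (\<lambda>x. eta \<alpha> (3/4) x * chi \<alpha> \<zeta> x)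
       = Ksum \<alpha> (psi \<zeta>) + \<i> * Ksum \<alpha> (psi (\<i> * \<zeta>)) - Ksum \<alpha> (psi (- \<zeta>)) - \<i> * Ksum \<alpha> (psi (- \<i> * \<zeta>))"
        by (simp only: chi_psi Kf1 Kf2 Kf3 zetaN4)
      also have "\<dots> = - (8 * A)" by (rule fin1[OF M p1 p2 p3])
      finally show ?thesis .
    qed
    then have "Ksum \<alpha> (chi \<alpha> \<zeta>) + zetaN 4 * Ksum \<alpha> (\<lambda>x. eta \<alpha> (1/4) x * chi \<alpha> \<zeta> x)
       - Ksum \<alpha> (\<lambda>x. eta \<alpha> (1/2) x * chi \<alpha> \<zeta> x) - zetaN 4 * Ksum \<alpha> (\<lambda>x. eta \<alpha> (3/4) x * chi \<alpha> \<zeta> x)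
       \<in> ideal_span (cyc_int (4 * k)) ((\<lambda>x. 8 * x) ` P) \<longleftrightarrow> A \<in> P"
      by (intro final_equiv[OF kodd P(1) AR]) simp
    then show ?thesis unfolding Tq if_P[OF True] L by (rule sym)
  next
    case False
    have h: "T div 2 mod 4 = 2" unfolding T_def by (rule m8b[OF q4 False])
    have p1: "\<i> ^ (T div 2) = -1" using i_pow_mod[of "T div 2"] h by simp
    have p2: "(-1::complex) ^ (T div 2) = 1" proof -
      have "even (T div 2)" using h by presburger
      then show ?thesis by simp
    qed
    have p3: "(- \<i>) ^ (T div 2) = -1" using p1 p2 by (simp add: power_minus[of \<i>])
    have "Ksum \<alpha> (chi \<alpha> \<zeta>) - zetaN 4 * Ksum \<alpha> (\<lambda>x. eta \<alpha> (1/4) x * chi \<alpha> \<zeta> x)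
       - Ksum \<alpha> (\<lambda>x. eta \<alpha> (1/2) x * chi \<alpha> \<zeta> x) + zetaN 4 * Ksum \<alpha> (\<lambda>x. eta \<alpha> (3/4) x * chi \<alpha> \<zeta> x)
       = - (8 * A)"
    proof -
      have "Ksum \<alpha> (chi \<alpha> \<zeta>) - zetaN 4 * Ksum \<alpha> (\<lambda>x. eta \<alpha> (1/4) x * chi \<alpha> \<zeta> x)
       - Ksum \<alpha> (\<lambda>x. eta \<alpha> (1/2) x * chi \<alpha> \<zeta> x) + zetaN 4 * Ksum \<alpha> (\<lambda>x. eta \<alpha> (3/4) x * chi \<alpha> \<zeta> x)
       = Ksum \<alpha> (psi \<zeta>) - \<i> * Ksum \<alpha> (psi (\<i> * \<zeta>)) - Ksum \<alpha> (psi (- \<zeta>)) + \<i> * Ksum \<alpha> (psi (- \<i> * \<zeta>))"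
        by (simp only: chi_psi Kf1 Kf2 Kf3 zetaN4)
      also have "\<dots> = - (8 * A)"
        by (rule fin2[OF M p1 p2 p3])
      finally show ?thesis .
    qed
    then have "Ksum \<alpha> (chi \<alpha> \<zeta>) - zetaN 4 * Ksum \<alpha> (\<lambda>x. eta \<alpha> (1/4) x * chi \<alpha> \<zeta> x)
       - Ksum \<alpha> (\<lambda>x. eta \<alpha> (1/2) x * chi \<alpha> \<zeta> x) + zetaN 4 * Ksum \<alpha> (\<lambda>x. eta \<alpha> (3/4) x * chi \<alpha> \<zeta> x)
       \<in> ideal_span (cyc_int (4 * k)) ((\<lambda>x. 8 * x) ` P) \<longleftrightarrow> A \<in> P"
      by (intro final_equiv[OF kodd P(1) AR]) simp
    then show ?thesis unfolding Tq if_not_P[OF False] L by (rule sym)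
  qed
qed

end
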